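(* Let $(A,\circ)$ be a Novikov algebra, let $f:A\to A$ be a linear map, and define a new multiplication $a\bullet b=a\circ f(b)$. Then for all $a,b,c,d\in A$, $$((a\bullet b)\bullet c)\bullet d+((a\bullet c)\bullet d)\bullet b+((a\bullet d)\bullet b)\bullet c-((a\bullet c)\bullet b)\bullet d-((a\bullet d)\bullet c)\bullet b-((a\bullet b)\bullet d)\bullet c=0.$$
   Context: A (right) Novikov algebra is an algebra $(A,\circ)$ satisfying $a\circ(b\circ c)-(a\circ b)\circ c=a\circ(c\circ b)-(a\circ c)\circ b$ and $a\circ(b\circ c)=b\circ(a\circ c)$ for all $a,b,c$. *)

theory Defs
  imports Complex_Main
begin

definition bilinear_prod ::
  "('k::field \<Rightarrow> 'v::ab_group_add \<Rightarrow> 'v) \<Rightarrow> ('v \<Rightarrow> 'v \<Rightarrow> 'v) \<Rightarrow> bool" where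
  "bilinear_prod scale mult \<longleftrightarrow>
     (\<forall>a b c. mult (a + b) c = mult a c + mult b c) \<and>
     (\<forall>a b c. mult a (b + c) = mult a b + mult a c) \<and>
     (\<forall>k a b. mult (scale k a) b = scale k (mult a b)) \<and>
     (\<forall>k a b. mult a (scale k b) = scale k (mult a b))"

definition novikov_algebra ::
  "('k::field \<Rightarrow> 'v::ab_group_add \<Rightarrow> 'v) \<Rightarrow> ('v \<Rightarrow> 'v \<Rightarrow> 'v) \<Rightarrow> bool" where
  "novikov_algebra scale mult \<longleftrightarrow>
     Vector_Spaces.vector_space scale \<and> bilinear_prod scale mult \<and>
     (\<forall>a b c. mult a (mult b c) - mult (mult a b) c = mult a (mult c b) - mult (mult a c) b) \<and>
     (\<forall>a b c. mult a (mult b c) = mult b (mult a c))"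

end

theory Submission
  imports Defs
begin

lemma swapd: "(X::'a::ab_group_add) - Y = Z - W \<Longrightarrow> Y - W = X - Z"
  by (simp add: algebra_simps)

lemma key:
  fixes m :: "'v::ab_group_add \<Rightarrow> 'v \<Rightarrow> 'v"
  assumes addR: "\<And>a b c. m a (b + c) = m a b + m a c"
    and rs: "\<And>a b c. m a (m b c) - m (m a b) c = m a (m c b) - m (m a c) b"
    and lc: "\<And>a b c. m a (m b c) = m b (m a c)"
  shows "m (m (m a x) y) z + m (m (m a y) z) x + m (m (m a z) x) y
       - m (m (m a y) x) z - m (m (m a z) y) x - m (m (m a x) z) y = 0"
proof -
  have sub: "\<And>a b c. m a (b - c) = m a b - m a c"
  proof -
    fix a b c
    have "m a (b - c) + m a c = m a b" using addR[of a "b - c" c] by simp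
    thus "m a (b - c) = m a b - m a c" by (simp add: eq_diff_eq)
  qed
  have r: "\<And>a y z. m (m a y) z - m (m a z) y = m a (m y z) - m a (m z y)"
    using rs by (rule swapd)
  have "m (m (m a x) y) z - m (m (m a x) z) y = m (m a x) (m y z) - m (m a x) (m z y)" by (rule r)
  also have "\<dots> = m y (m (m a x) z) - m z (m (m a x) y)" using lc[of "m a x" y z] lc[of "m a x" z y] by simp
  finally have e1: "m (m (m a x) y) z - m (m (m a x) z) y = m y (m (m a x) z) - m z (m (m a x) y)" .
  have "m (m (m a y) z) x - m (m (m a y) x) z = m (m a y) (m z x) - m (m a y) (m x z)" by (rule r)
  also have "\<dots> = m z (m (m a y) x) - m x (m (m a y) z)" using lc[of "m a y" z x] lc[of "m a y" x z] by simp
  finally have e2: "m (m (m a y) z) x - m (m (m a y) x) z = m z (m (m a y) x) - m x (m (m a y) z)" .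
  have "m (m (m a z) x) y - m (m (m a z) y) x = m (m a z) (m x y) - m (m a z) (m y x)" by (rule r)
  also have "\<dots> = m x (m (m a z) y) - m y (m (m a z) x)" using lc[of "m a z" x y] lc[of "m a z" y x] by simp
  finally have e3: "m (m (m a z) x) y - m (m (m a z) y) x = m x (m (m a z) y) - m y (m (m a z) x)" .
  have "m y (m (m a x) z) - m y (m (m a z) x) = m y (m a (m x z) - m a (m z x))"
    using sub[of y "m (m a x) z" "m (m a z) x"] r[of a x z] by simp
  also have "\<dots> = m a (m y (m x z)) - m a (m y (m z x))" by (simp only: sub lc[of y a])
  finally have f1: "m y (m (m a x) z) - m y (m (m a z) x) = m a (m y (m x z)) - m a (m y (m z x))" .
  have "m z (m (m a y) x) - m z (m (m a x) y) = m z (m a (m y x) - m a (m x y))"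
    using sub[of z "m (m a y) x" "m (m a x) y"] r[of a y x] by simp
  also have "\<dots> = m a (m z (m y x)) - m a (m z (m x y))" by (simp only: sub lc[of z a])
  finally have f2: "m z (m (m a y) x) - m z (m (m a x) y) = m a (m z (m y x)) - m a (m z (m x y))" .
  have "m x (m (m a z) y) - m x (m (m a y) z) = m x (m a (m z y) - m a (m y z))"
    using sub[of x "m (m a z) y" "m (m a y) z"] r[of a z y] by simp
  also have "\<dots> = m a (m x (m z y)) - m a (m x (m y z))" by (simp only: sub lc[of x a])
  finally have f3: "m x (m (m a z) y) - m x (m (m a y) z) = m a (m x (m z y)) - m a (m x (m y z))" .
  have g1: "m x (m z y) = m z (m x y)" by (rule lc)
  have g2: "m x (m y z) = m y (m x z)" by (rule lc)
  have g3: "m y (m z x) = m z (m y x)" by (rule lc)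
  have "m (m (m a x) y) z + m (m (m a y) z) x + m (m (m a z) x) y
       - m (m (m a y) x) z - m (m (m a z) y) x - m (m (m a x) z) y
     = (m (m (m a x) y) z - m (m (m a x) z) y) + (m (m (m a y) z) x - m (m (m a y) x) z)
       + (m (m (m a z) x) y - m (m (m a z) y) x)" by (simp add: algebra_simps)
  also have "\<dots> = (m y (m (m a x) z) - m y (m (m a z) x)) + (m z (m (m a y) x) - m z (m (m a x) y))
      + (m x (m (m a z) y) - m x (m (m a y) z))" unfolding e1 e2 e3 by (simp add: algebra_simps)
  also have "\<dots> = 0" unfolding f1 f2 f3 g1 g2 g3 by (simp add: algebra_simps)
  finally show ?thesis .
qed

theorem mainTheorem8:
  fixes scale :: "'k::field \<Rightarrow> 'v::ab_group_add \<Rightarrow> 'v"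
    and mult :: "'v \<Rightarrow> 'v \<Rightarrow> 'v"
    and f :: "'v \<Rightarrow> 'v"
    and bullet :: "'v \<Rightarrow> 'v \<Rightarrow> 'v"
  assumes "novikov_algebra scale mult"
    and "Vector_Spaces.linear scale scale f"
    and "\<And>x y. bullet x y = mult x (f y)"
  shows "\<forall>a b c d.
    bullet (bullet (bullet a b) c) d + bullet (bullet (bullet a c) d) b + bullet (bullet (bullet a d) b) c
    - bullet (bullet (bullet a c) b) d - bullet (bullet (bullet a d) c) b - bullet (bullet (bullet a b) d) c = 0"
proof (intro allI)
  fix a b c d
  have A: "\<And>a b c. mult a (b + c) = mult a b + mult a c"
    and R: "\<And>a b c. mult a (mult b c) - mult (mult a b) c = mult a (mult c b) - mult (mult a c) b"
    and L: "\<And>a b c. mult a (mult b c) = mult b (mult a c)"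
    using assms(1) unfolding novikov_algebra_def bilinear_prod_def by blast+
  show "bullet (bullet (bullet a b) c) d + bullet (bullet (bullet a c) d) b + bullet (bullet (bullet a d) b) c
    - bullet (bullet (bullet a c) b) d - bullet (bullet (bullet a d) c) b - bullet (bullet (bullet a b) d) c = 0"
    unfolding assms(3) using key[of mult, OF A R L] by blast
qed

end
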